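(* Let $K\subseteq\mathbb{R}^n$ be a nonempty compact set, let $\mathbf{c}\in\mathbb{Z}^n$, let $F:=F_K(\mathbf{c})$, and assume $h_K(\mathbf{c})\in\mathbb{Z}$. Then for every $\mathbf{a}\in\mathbb{Z}^n$ there exists $N\ge0$ such that $$H^{\rm cg}_K(\mathbf{a}+i\mathbf{c})\cap H^=_K(\mathbf{c}) = H^{\rm cg}_F(\mathbf{a})\cap H^=_K(\mathbf{c})\quad\text{for all integers } i\ge N.$$
   Context: $h_K(\mathbf{a})=\sup_{\mathbf{x}\in K}\mathbf{a}\mathbf{x}$ (with $h_\emptyset\equiv-\infty$). For nonempty compact $K$: $H^=_K(\mathbf{a}):=\{\mathbf{x}\in\mathbb{R}^n:\mathbf{a}\mathbf{x}=h_K(\mathbf{a})\}$ and $F_K(\mathbf{a}):=K\cap H^=_K(\mathbf{a})$. For $\mathbf{a}\in\mathbb{Z}^n$, the CG cut of $K$ induced by $\mathbf{a}$ is the halfspace $H^{\rm cg}_K(\mathbf{a}):=\{\mathbf{x}\in\mathbb{R}^n:\mathbf{a}\mathbf{x}\le\lfloor h_K(\mathbf{a})\rfloor\}$. *)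

theory Defs
  imports "HOL-Analysis.Analysis"
begin

definition int_vec :: "real^'n \<Rightarrow> bool" where
  "int_vec a \<longleftrightarrow> (\<forall>j. a $ j \<in> \<int>)"

definition supp_fun :: "(real^'n) set \<Rightarrow> real^'n \<Rightarrow> real" where
  "supp_fun K a = Sup ((\<lambda>x. a \<bullet> x) ` K)"

definition supp_hyperplane :: "(real^'n) set \<Rightarrow> real^'n \<Rightarrow> (real^'n) set" where
  "supp_hyperplane K a = {x. a \<bullet> x = supp_fun K a}"

definition face_of_dir :: "(real^'n) set \<Rightarrow> real^'n \<Rightarrow> (real^'n) set" where
  "face_of_dir K a = K \<inter> supp_hyperplane K a"

definition cg_cut :: "(real^'n) set \<Rightarrow> real^'n \<Rightarrow> (real^'n) set" where
  "cg_cut K a = {x. a \<bullet> x \<le> of_int \<lfloor>supp_fun K a\<rfloor>}"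

end

theory Submission
  imports Defs
begin

lemma supp_attain:
  fixes K :: "(real^'n) set"
  assumes "K \<noteq> {}" "compact K"
  shows "\<exists>x\<in>K. supp_fun K v = v \<bullet> x \<and> (\<forall>y\<in>K. v \<bullet> y \<le> v \<bullet> x)"
proof -
  have "compact ((\<lambda>x. v \<bullet> x) ` K)"
    by (intro compact_continuous_image assms continuous_intros)
  then obtain x where x: "x \<in> K" "\<forall>y\<in>K. v \<bullet> y \<le> v \<bullet> x"
    using compact_attains_sup[of "(\<lambda>x. v \<bullet> x) ` K"] assms(1) by auto
  have "supp_fun K v = v \<bullet> x"
    unfolding supp_fun_def using x by (intro cSup_eq_maximum) auto
  with x show ?thesis by blast
qed

theorem lemma2p4:
  fixes K :: "(real^'n) set" and c a :: "real^'n"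
  assumes "K \<noteq> {}" and "compact K"
    and "int_vec c" and "supp_fun K c \<in> \<int>"
    and "int_vec a"
  shows "\<exists>N::nat. \<forall>i::nat. i \<ge> N \<longrightarrow>
           cg_cut K (a + real i *\<^sub>R c) \<inter> supp_hyperplane K c
           = cg_cut (face_of_dir K c) a \<inter> supp_hyperplane K c"
proof -
  define h where "h = supp_fun K c"
  define F where "F = face_of_dir K c"
  obtain hi where hi: "h = of_int hi" using assms(4) unfolding h_def by (auto elim: Ints_cases)
  obtain x0 where x0: "x0 \<in> K" "h = c \<bullet> x0" "\<forall>y\<in>K. c \<bullet> y \<le> c \<bullet> x0"
    using supp_attain[OF assms(1,2), of c] unfolding h_def by blast
  have Fdef: "F = K \<inter> {x. c \<bullet> x = h}"
    unfolding F_def face_of_dir_def supp_hyperplane_def h_def by simp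
  have Fne: "F \<noteq> {}" using x0 Fdef by auto
  have "closed {x::real^'n. c \<bullet> x = h}" by (intro closed_hyperplane)
  hence Fc: "compact F" unfolding Fdef using assms(2) by (intro compact_Int_closed) auto
  define hF where "hF = supp_fun F a"
  obtain x2 where x2: "x2 \<in> F" "hF = a \<bullet> x2" "\<forall>y\<in>F. a \<bullet> y \<le> a \<bullet> x2"
    using supp_attain[OF Fne Fc, of a] unfolding hF_def by blast
  define t where "t = real_of_int (\<lfloor>hF\<rfloor> + 1)"
  have hFt: "hF < t" unfolding t_def by linarith
  define C where "C = K \<inter> {x. t \<le> a \<bullet> x}"
  obtain \<delta> where \<delta>: "\<delta> > 0" "\<forall>x\<in>C. c \<bullet> x \<le> h - \<delta>"
  proof (cases "C = {}")
    case True then show ?thesis using that[of 1] by auto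
  next
    case False
    have "closed {x::real^'n. t \<le> a \<bullet> x}" by (intro closed_halfspace_ge)
    hence Cc: "compact C" unfolding C_def using assms(2) by (intro compact_Int_closed) auto
    obtain x1 where x1: "x1 \<in> C" "\<forall>y\<in>C. c \<bullet> y \<le> c \<bullet> x1"
      using supp_attain[OF False Cc, of c] by blast
    have "c \<bullet> x1 \<le> h" using x1 x0 unfolding C_def by auto
    moreover have "c \<bullet> x1 \<noteq> h"
    proof
      assume "c \<bullet> x1 = h"
      hence "x1 \<in> F" using x1 Fdef C_def by auto
      hence "a \<bullet> x1 \<le> hF" using x2 by auto
      with x1 hFt show False unfolding C_def by auto
    qed
    ultimately show ?thesis using that[of "h - c \<bullet> x1"] x1 by auto
  qed
  obtain xm where xm: "xm \<in> K" "\<forall>y\<in>K. a \<bullet> y \<le> a \<bullet> xm"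
    using supp_attain[OF assms(1,2), of a] by blast
  define M where "M = a \<bullet> xm"
  define N where "N = nat \<lceil>(M - t) / \<delta>\<rceil> + 1"
  have key: "real_of_int \<lfloor>supp_fun K (a + real i *\<^sub>R c)\<rfloor> = real_of_int \<lfloor>hF\<rfloor> + real i * h"
    if "i \<ge> N" for i
  proof -
    have "(M - t) / \<delta> < real i" using that unfolding N_def by linarith
    hence iM: "M - t < real i * \<delta>" using \<delta>(1) by (simp add: divide_less_eq mult.commute)
    define v where "v = a + real i *\<^sub>R c"
    obtain x1 where x1: "x1 \<in> K" "supp_fun K v = v \<bullet> x1" "\<forall>y\<in>K. v \<bullet> y \<le> v \<bullet> x1"
      using supp_attain[OF assms(1,2), of v] by blast
    have vx: "v \<bullet> y = a \<bullet> y + real i * (c \<bullet> y)" for y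
      unfolding v_def by (simp add: inner_add_left)
    have cx1: "c \<bullet> x1 \<le> h" using x1 x0 by auto
    have up: "supp_fun K v < t + real i * h"
    proof (cases "x1 \<in> C")
      case True
      hence "c \<bullet> x1 \<le> h - \<delta>" using \<delta> by auto
      hence "real i * (c \<bullet> x1) \<le> real i * (h - \<delta>)" by (simp add: mult_left_mono)
      moreover have "a \<bullet> x1 \<le> M" using xm x1 M_def by auto
      ultimately show ?thesis using x1(2) vx[of x1] iM by (simp add: algebra_simps)
    next
      case False
      hence "a \<bullet> x1 < t" using x1 C_def by auto
      moreover have "real i * (c \<bullet> x1) \<le> real i * h" using cx1 by (simp add: mult_left_mono)
      ultimately show ?thesis using x1(2) vx[of x1] by simp
    qed
    have x2K: "x2 \<in> K" "c \<bullet> x2 = h" using x2 Fdef by auto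
    have lo: "hF + real i * h \<le> supp_fun K v"
      using x1(2,3) x2K vx[of x2] x2(2) by force
    have "\<lfloor>supp_fun K v\<rfloor> = \<lfloor>hF\<rfloor> + int i * hi"
    proof (rule floor_unique)
      have "real_of_int (\<lfloor>hF\<rfloor> + int i * hi) \<le> hF + real i * h"
        using hi by simp
      thus "real_of_int (\<lfloor>hF\<rfloor> + int i * hi) \<le> supp_fun K v" using lo by linarith
      show "supp_fun K v < real_of_int (\<lfloor>hF\<rfloor> + int i * hi) + 1"
        using up hi t_def by simp
    qed
    thus ?thesis unfolding v_def using hi by simp
  qed
  show ?thesis
  proof (intro exI allI impI)
    fix i :: nat assume iN: "N \<le> i"
    show "cg_cut K (a + real i *\<^sub>R c) \<inter> supp_hyperplane K c
           = cg_cut (face_of_dir K c) a \<inter> supp_hyperplane K c"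
    proof (rule set_eqI)
      fix x
      show "x \<in> cg_cut K (a + real i *\<^sub>R c) \<inter> supp_hyperplane K c \<longleftrightarrow>
            x \<in> cg_cut (face_of_dir K c) a \<inter> supp_hyperplane K c"
        using key[OF iN]
        unfolding cg_cut_def supp_hyperplane_def F_def[symmetric] hF_def[symmetric] h_def[symmetric]
        by (auto simp: inner_add_left)
    qed
  qed
qed

end
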